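(* Let $T>0$, $f:\mathbb{R}\times[0,\infty)\to\mathbb{R}$ locally H\"older continuous, $C^1$ in $u$, with $f(t,0)=0$ and $f(t+T,u)=f(t,u)$. Let $u_0\in L^\infty(\mathbb{R})$ be nonnegative with compact support and let $u$, the solution of $u_t=u_{xx}+f(t,u)$, $u(\cdot,0)=u_0$, be bounded. Let $x_0$ be a point such that every $v\in\widetilde{\omega}(u)$ satisfies $v(2x_0-x,t)=v(x,t)$ for all $x,t$ and $v_x(x,t)\ge0$ for $x<x_0$, $v_x(x,t)\le0$ for $x>x_0$. Then every $v\in\widetilde{\omega}(u)$ is either symmetrically decreasing with respect to $x_0$ or spatially homogeneous ($v=v(t)$).
   Context: $\widetilde{\omega}(u)$ is the set of entire solutions $v$ of $v_t=v_{xx}+f(t,v)$ on $\mathbb{R}^2$ such that $u(x,t+k_jT)\to v(x,t)$ locally uniformly for some positive integers $k_j\to\infty$. $v$ is symmetrically decreasing w.r.t. $x_0$ if $v(2x_0-x,t)=v(x,t)$ and $v_x(x,t)<0$ for all $x>x_0$, $t\in\mathbb{R}$. *)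

theory Defs
  imports "HOL-Analysis.Analysis"
begin

text \<open>Functions of space and time are written as curried functions v x t
  (first argument: space x, second: time t). The nonlinearity is f t w.\<close>

definition locally_hoelder_on :: "(real \<times> real) set \<Rightarrow> (real \<Rightarrow> real \<Rightarrow> real) \<Rightarrow> bool" where
  "locally_hoelder_on S f \<longleftrightarrow>
     (\<forall>K. compact K \<and> K \<subseteq> S \<longrightarrow>
        (\<exists>\<alpha> C. 0 < \<alpha> \<and> \<alpha> \<le> 1 \<and>
           (\<forall>p\<in>K. \<forall>q\<in>K. \<bar>f (fst p) (snd p) - f (fst q) (snd q)\<bar> \<le> C * dist p q powr \<alpha>)))"

definition C1_in_u :: "(real \<Rightarrow> real \<Rightarrow> real) \<Rightarrow> bool" where
  "C1_in_u f \<longleftrightarrow>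
     (\<exists>fu. (\<forall>t w. w \<ge> 0 \<longrightarrow> ((\<lambda>z. f t z) has_real_derivative fu t w) (at w within {0..}))
        \<and> continuous_on (UNIV \<times> {0..}) (\<lambda>(t, w). fu t w))"

definition classical_solution_on ::
  "(real \<Rightarrow> real \<Rightarrow> real) \<Rightarrow> (real \<times> real) set \<Rightarrow> (real \<Rightarrow> real \<Rightarrow> real) \<Rightarrow> bool" where
  "classical_solution_on f S v \<longleftrightarrow>
     (\<exists>vx vxx vt.
        (\<forall>(x, t)\<in>S.
            ((\<lambda>y. v y t) has_real_derivative vx x t) (at x)
          \<and> ((\<lambda>y. vx y t) has_real_derivative vxx x t) (at x)
          \<and> ((\<lambda>s. v x s) has_real_derivative vt x t) (at t)
          \<and> vt x t = vxx x t + f t (v x t)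
          \<and> v x t \<ge> 0)
      \<and> continuous_on S (\<lambda>(x, t). v x t)
      \<and> continuous_on S (\<lambda>(x, t). vx x t)
      \<and> continuous_on S (\<lambda>(x, t). vxx x t)
      \<and> continuous_on S (\<lambda>(x, t). vt x t))"

text \<open>u solves the Cauchy problem u_t = u_xx + f(t,u) for t > 0, u(.,0) = u0,
  the initial datum being attained in L^1_loc (standard for L^infinity data).\<close>
definition solves_cauchy ::
  "(real \<Rightarrow> real \<Rightarrow> real) \<Rightarrow> (real \<Rightarrow> real) \<Rightarrow> (real \<Rightarrow> real \<Rightarrow> real) \<Rightarrow> bool" where
  "solves_cauchy f u0 u \<longleftrightarrow>
     classical_solution_on f (UNIV \<times> {0<..}) u
   \<and> (\<forall>R. ((\<lambda>t. LINT x:{-R..R}|lborel. \<bar>u x t - u0 x\<bar>) \<longlongrightarrow> 0) (at_right 0))"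

definition entire_solution :: "(real \<Rightarrow> real \<Rightarrow> real) \<Rightarrow> (real \<Rightarrow> real \<Rightarrow> real) \<Rightarrow> bool" where
  "entire_solution f v \<longleftrightarrow> classical_solution_on f UNIV v"

definition omega_tilde ::
  "(real \<Rightarrow> real \<Rightarrow> real) \<Rightarrow> real \<Rightarrow> (real \<Rightarrow> real \<Rightarrow> real) \<Rightarrow> (real \<Rightarrow> real \<Rightarrow> real) set" where
  "omega_tilde f T u =
     {v. entire_solution f v \<and>
         (\<exists>k :: nat \<Rightarrow> nat. (\<forall>j. 0 < k j) \<and> filterlim k at_top sequentially \<and>
            (\<forall>K :: (real \<times> real) set. compact K \<longrightarrow>
               (\<forall>e>0. \<forall>\<^sub>F j in sequentially. \<forall>(x, t)\<in>K. \<bar>u x (t + real (k j) * T) - v x t\<bar> < e)))}"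

definition sym_decreasing :: "(real \<Rightarrow> real \<Rightarrow> real) \<Rightarrow> real \<Rightarrow> bool" where
  "sym_decreasing v x0 \<longleftrightarrow>
     (\<forall>x t. v (2 * x0 - x) t = v x t) \<and> (\<forall>x t. x > x0 \<longrightarrow> deriv (\<lambda>y. v y t) x < 0)"

end

theory Submission
  imports Defs
begin


lemma second_deriv_test:
  fixes g gx :: "real \<Rightarrow> real"
  assumes ab: "a < x" "x < b"
    and dg: "\<And>y. a < y \<Longrightarrow> y < b \<Longrightarrow> (g has_real_derivative gx y) (at y)"
    and dgx: "(gx has_real_derivative gxx) (at x)"
    and mx: "\<And>y. a < y \<Longrightarrow> y < b \<Longrightarrow> g y \<le> g x"
  shows "gxx \<le> 0"
proof (rule ccontr)
  assume "\<not> gxx \<le> 0"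
  hence pos: "gxx > 0" by simp
  have "gx x = 0"
    by (rule DERIV_local_max[OF dg[OF ab], of "min (x-a) (b-x)"]) (use ab mx in \<open>auto simp: abs_if\<close>)
  obtain d where d: "d > 0" "\<And>h. h > 0 \<Longrightarrow> h < d \<Longrightarrow> gx x < gx (x + h)"
    using DERIV_pos_inc_right[OF dgx pos] by blast
  define h where "h = min (d/2) ((b-x)/2)"
  have h1: "h \<le> (b-x)/2" "h \<le> d/2" unfolding h_def by (simp_all add: min_def)
  have h: "h > 0" "h < d" "x + h < b" using d ab h1 by (auto simp: h_def)
  obtain z where z: "z > x" "z < x + h" "g (x+h) - g x = (x + h - x) * gx z"
    using MVT2[of x "x+h" g gx] h dg ab by force
  have "gx z > 0" using d(2)[of "z - x"] z h \<open>gx x = 0\<close> by auto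
  hence "h * gx z > 0" using h by simp
  hence "g (x+h) > g x" using z by simp
  moreover have "g (x+h) \<le> g x" using mx[of "x+h"] h ab by auto
  ultimately show False by simp
qed

lemma max_principle:
  fixes P Px Pxx Pt :: "real \<Rightarrow> real \<Rightarrow> real"
  assumes cont: "continuous_on ({a..b} \<times> {tA..tB}) (\<lambda>p. P (fst p) (snd p))"
    and dx: "\<And>x t. a < x \<Longrightarrow> x < b \<Longrightarrow> tA < t \<Longrightarrow> t \<le> tB \<Longrightarrow> ((\<lambda>y. P y t) has_real_derivative Px x t) (at x)"
    and dxx: "\<And>x t. a < x \<Longrightarrow> x < b \<Longrightarrow> tA < t \<Longrightarrow> t \<le> tB \<Longrightarrow> ((\<lambda>y. Px y t) has_real_derivative Pxx x t) (at x)"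
    and dt: "\<And>x t. a < x \<Longrightarrow> x < b \<Longrightarrow> tA < t \<Longrightarrow> t \<le> tB \<Longrightarrow> ((\<lambda>s. P x s) has_real_derivative Pt x t) (at t)"
    and sub: "\<And>x t. a < x \<Longrightarrow> x < b \<Longrightarrow> tA < t \<Longrightarrow> t \<le> tB \<Longrightarrow> P x t > 0 \<Longrightarrow> Pt x t - Pxx x t < 0"
    and bl: "\<And>t. tA \<le> t \<Longrightarrow> t \<le> tB \<Longrightarrow> P a t \<le> 0"
    and br: "\<And>t. tA \<le> t \<Longrightarrow> t \<le> tB \<Longrightarrow> P b t \<le> 0"
    and bb: "\<And>x. a \<le> x \<Longrightarrow> x \<le> b \<Longrightarrow> P x tA \<le> 0"
    and x: "a \<le> x" "x \<le> b" and t: "tA \<le> t" "t \<le> tB"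
  shows "P x t \<le> 0"
proof (rule ccontr)
  assume "\<not> P x t \<le> 0"
  hence pxt: "P x t > 0" by simp
  have "compact ({a..b} \<times> {tA..tB})" by (intro compact_Times compact_Icc)
  moreover have "{a..b} \<times> {tA..tB} \<noteq> {}" using x t by auto
  ultimately obtain p where p: "p \<in> {a..b} \<times> {tA..tB}"
    and pm: "\<And>q. q \<in> {a..b} \<times> {tA..tB} \<Longrightarrow> P (fst q) (snd q) \<le> P (fst p) (snd p)"
    using continuous_attains_sup[OF _ _ cont] by blast
  obtain xm tm where p_eq: "p = (xm, tm)" by (cases p)
  have mx: "\<And>y s. a \<le> y \<Longrightarrow> y \<le> b \<Longrightarrow> tA \<le> s \<Longrightarrow> s \<le> tB \<Longrightarrow> P y s \<le> P xm tm"
    using pm p_eq by force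
  have pos: "P xm tm > 0" using mx[OF x t] pxt by simp
  have xm: "a \<le> xm" "xm \<le> b" and tm: "tA \<le> tm" "tm \<le> tB" using p p_eq by auto
  have "xm \<noteq> a" using bl[OF tm] pos by auto
  moreover have "xm \<noteq> b" using br[OF tm] pos by auto
  moreover have "tm \<noteq> tA" using bb[OF xm] pos by auto
  ultimately have xm': "a < xm" "xm < b" and tm': "tA < tm" using xm tm by auto
  have "Pxx xm tm \<le> 0"
    by (rule second_deriv_test[of a xm b "\<lambda>y. P y tm" "\<lambda>y. Px y tm"])
       (use xm' tm' tm dx dxx mx in auto)
  moreover have "Pt xm tm \<ge> 0"
  proof (rule ccontr)
    assume "\<not> Pt xm tm \<ge> 0"
    then obtain d where d: "d > 0" "\<And>h. h > 0 \<Longrightarrow> h < d \<Longrightarrow> P xm tm < P xm (tm - h)"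
      using DERIV_neg_dec_left[OF dt[OF xm' tm' tm(2)]] by force
    define h where "h = min (d/2) ((tm - tA)/2)"
    have "h > 0" "h < d" using d tm' by (auto simp: h_def)
    hence "P xm tm < P xm (tm - h)" using d by auto
    moreover have "h \<le> (tm - tA)/2" unfolding h_def by (simp_all add: min_def)
    hence "tA \<le> tm - h" "tm - h \<le> tB" using tm \<open>h>0\<close> by auto
    hence "P xm (tm - h) \<le> P xm tm" using mx[OF xm] by blast
    ultimately show False by simp
  qed
  ultimately have "Pt xm tm - Pxx xm tm \<ge> 0" by simp
  with sub[OF xm' tm' tm(2) pos] show False by simp
qed



lemma lipschitz_f:
  assumes "C1_in_u f"
  shows "\<exists>L\<ge>0. \<forall>t a b. T1 \<le> t \<and> t \<le> T2 \<and> 0 \<le> a \<and> a \<le> M \<and> 0 \<le> b \<and> b \<le> M \<longrightarrow> \<bar>f t a - f t b\<bar> \<le> L * \<bar>a - b\<bar>"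
proof -
  obtain fu where d: "\<And>t w. w \<ge> 0 \<Longrightarrow> ((\<lambda>z. f t z) has_real_derivative fu t w) (at w within {0..})"
    and c: "continuous_on (UNIV \<times> {0..}) (\<lambda>(t, w). fu t w)"
    using assms unfolding C1_in_u_def by blast
  have "compact ({T1..T2} \<times> {0..M})" by (intro compact_Times compact_Icc)
  moreover have "continuous_on ({T1..T2} \<times> {0..M}) (\<lambda>(t, w). fu t w)"
    using c by (rule continuous_on_subset) auto
  ultimately have "bounded ((\<lambda>(t, w). fu t w) ` ({T1..T2} \<times> {0..M}))"
    using compact_continuous_image compact_imp_bounded by blast
  then obtain B where B: "\<And>p. p \<in> {T1..T2} \<times> {0..M} \<Longrightarrow> \<bar>(\<lambda>(t, w). fu t w) p\<bar> \<le> B"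
    unfolding bounded_iff by fastforce
  show ?thesis
  proof (intro exI[of _ "max B 0"] conjI allI impI)
    fix t a b assume h: "T1 \<le> t \<and> t \<le> T2 \<and> 0 \<le> a \<and> a \<le> M \<and> 0 \<le> b \<and> b \<le> M"
    have "norm (f t a - f t b) \<le> max B 0 * norm (a - b)"
    proof (rule field_differentiable_bound[of "{0..M}"])
      show "convex {0..M::real}" by simp
      fix z :: real assume z: "z \<in> {0..M}"
      show "((\<lambda>z. f t z) has_field_derivative fu t z) (at z within {0..M})"
        using d[of z t] z by (auto intro: has_field_derivative_subset)
      show "norm (fu t z) \<le> max B 0" using B[of "(t,z)"] z h by auto
    qed (use h in auto)
    thus "\<bar>f t a - f t b\<bar> \<le> max B 0 * \<bar>a - b\<bar>" by simp
  qed simp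
qed



lemma zero_unique:
  fixes w wx wxx wt :: "real \<Rightarrow> real \<Rightarrow> real"
  assumes dx: "\<And>x t. ((\<lambda>y. w y t) has_real_derivative wx x t) (at x)"
    and dxx: "\<And>x t. ((\<lambda>y. wx y t) has_real_derivative wxx x t) (at x)"
    and dt: "\<And>x t. ((\<lambda>s. w x s) has_real_derivative wt x t) (at t)"
    and cont: "continuous_on UNIV (\<lambda>p. w (fst p) (snd p))"
    and bnd: "\<And>x t. \<bar>w x t\<bar> \<le> B"
    and init: "\<And>x. w x tlo = 0"
    and ineq: "\<And>x t. tlo \<le> t \<Longrightarrow> t \<le> thi \<Longrightarrow> wt x t - wxx x t \<le> L * \<bar>w x t\<bar>"
    and L: "L \<ge> 0" and t: "tlo \<le> t" "t \<le> thi"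
  shows "w x t \<le> 0"
proof (rule ccontr)
  assume "\<not> w x t \<le> 0"
  hence wpos: "w x t > 0" by simp
  define lam where "lam = L + 1"
  define e where "e s = exp (- lam * (s - tlo))" for s
  have epos: "e s > 0" for s unfolding e_def by simp
  have ele: "e s \<le> 1" if "s \<ge> tlo" for s unfolding e_def lam_def using that L
    by (simp add: mult_nonpos_nonneg)
  have B0: "B \<ge> 0" using bnd[of x t] by simp
  have ewB: "e s * w y s \<le> B" if "s \<ge> tlo" for y s
  proof -
    have "e s * w y s \<le> e s * \<bar>w y s\<bar>" using epos[of s] by (intro mult_left_mono) auto
    also have "\<dots> \<le> \<bar>w y s\<bar>" using ele[OF that] epos[of s] by (intro mult_left_le_one_le) auto
    finally show ?thesis using bnd[of y s] by simp
  qed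
  define a where "a = e t * w x t"
  define c where "c = x * x + 2 * (t - tlo) + 1"
  have apos: "a > 0" unfolding a_def using epos wpos by simp
  have cpos: "c > 0" unfolding c_def using t by (simp add: add_nonneg_pos)
  define eps where "eps = a / (2 * c)"
  have epspos: "eps > 0" unfolding eps_def using apos cpos by simp
  define R where "R = sqrt (B / eps) + \<bar>x\<bar> + 1"
  have R2: "R * R \<ge> B / eps"
  proof -
    have "sqrt (B/eps) \<le> R" unfolding R_def by simp
    hence "sqrt (B/eps) * sqrt (B/eps) \<le> R * R"
      by (intro mult_mono) (auto simp: R_def B0 epspos less_imp_le)
    thus ?thesis using B0 epspos by simp
  qed
  hence R2': "eps * (R * R) \<ge> B" using epspos by (simp add: field_simps)
  define P where "P y s = e s * w y s - eps * (y * y + 2 * (s - tlo) + 1)" for y s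
  have "P x t \<le> 0"
  proof (rule max_principle[where P = P and a = "-R" and b = R and tA = tlo and tB = thi
        and Px = "\<lambda>y s. e s * wx y s - eps * (2 * y)"
        and Pxx = "\<lambda>y s. e s * wxx y s - eps * 2"
        and Pt = "\<lambda>y s. (- lam * e s) * w y s + e s * wt y s - eps * 2"])
    have ce: "continuous_on UNIV e" unfolding e_def by (intro continuous_intros)
    show "continuous_on ({- R..R} \<times> {tlo..thi}) (\<lambda>p. P (fst p) (snd p))"
    proof (rule continuous_on_subset[of UNIV])
      have c1: "continuous_on UNIV (\<lambda>p::real\<times>real. e (snd p))"
        using continuous_on_compose2[OF ce continuous_on_snd[OF continuous_on_id]] by simp
      have c2: "continuous_on UNIV (\<lambda>p::real\<times>real. eps * (fst p * fst p + 2 * (snd p - tlo) + 1))"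
        by (intro continuous_intros)
      show "continuous_on UNIV (\<lambda>p. P (fst p) (snd p))"
        unfolding P_def using continuous_on_diff[OF continuous_on_mult[OF c1 cont] c2] by simp
    qed simp
    fix y s
    show "((\<lambda>y. P y s) has_real_derivative e s * wx y s - eps * (2 * y)) (at y)"
      unfolding P_def by (auto intro!: derivative_eq_intros dx)
    show "((\<lambda>y. e s * wx y s - eps * (2 * y)) has_real_derivative e s * wxx y s - eps * 2) (at y)"
      by (auto intro!: derivative_eq_intros dxx)
    have de: "(e has_real_derivative (- lam * e s)) (at s)"
      unfolding e_def by (auto intro!: derivative_eq_intros)
    show "((\<lambda>s. P y s) has_real_derivative (- lam * e s) * w y s + e s * wt y s - eps * 2) (at s)"
      unfolding P_def by (auto intro!: derivative_eq_intros dt de)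
    assume ys: "- R < y" "y < R" "tlo < s" "s \<le> thi" and Ppos: "P y s > 0"
    have "eps * (y * y + 2 * (s - tlo) + 1) > 0" using epspos ys
      by (intro mult_pos_pos) (auto simp: add_nonneg_pos)
    hence "e s * w y s > 0" using Ppos unfolding P_def by simp
    hence wy: "w y s > 0" using epos[of s] by (simp add: zero_less_mult_iff)
    have "e s * (wt y s - wxx y s) \<le> e s * (L * w y s)"
      using ineq[of s y] ys wy epos[of s] by (intro mult_left_mono) auto
    hence "- lam * e s * w y s + e s * wt y s - eps * 2 - (e s * wxx y s - eps * 2)
          \<le> - e s * w y s" unfolding lam_def by (simp add: algebra_simps)
    also have "\<dots> < 0" using wy epos[of s] by simp
    finally show "- lam * e s * w y s + e s * wt y s - eps * 2 - (e s * wxx y s - eps * 2) < 0" .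
  next
    fix s assume s: "tlo \<le> s" "s \<le> thi"
    have "e s * w (-R) s \<le> B" using ewB[OF s(1)] .
    moreover have "eps * (R * R) \<le> eps * ((-R) * (-R) + 2 * (s - tlo) + 1)"
      using s epspos by (intro mult_left_mono) auto
    ultimately show "P (- R) s \<le> 0" unfolding P_def using R2' by linarith
  next
    fix s assume s: "tlo \<le> s" "s \<le> thi"
    have "e s * w R s \<le> B" using ewB[OF s(1)] .
    moreover have "eps * (R * R) \<le> eps * (R * R + 2 * (s - tlo) + 1)"
      using s epspos by (intro mult_left_mono) auto
    ultimately show "P R s \<le> 0" unfolding P_def using R2' by linarith
  next
    fix y :: real
    have "0 \<le> eps * (y * y + 2 * (tlo - tlo) + 1)" using epspos by simp
    thus "P y tlo \<le> 0" unfolding P_def by (simp add: init)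
  next
    have "sqrt (B/eps) \<ge> 0" using B0 epspos by simp
    thus "- R \<le> x" "x \<le> R" unfolding R_def by (smt (verit) abs_ge_self abs_ge_minus_self)+
  qed (use t in auto)
  moreover have "P x t = a - eps * c" unfolding P_def a_def c_def by simp
  moreover have "eps * c = a / 2" unfolding eps_def using cpos by simp
  ultimately show False using apos by simp
qed



locale esol =
  fixes f :: "real \<Rightarrow> real \<Rightarrow> real" and v vx vxx vt :: "real \<Rightarrow> real \<Rightarrow> real" and M x0 :: real
  assumes dx: "\<And>x t. ((\<lambda>y. v y t) has_real_derivative vx x t) (at x)"
    and dxx: "\<And>x t. ((\<lambda>y. vx y t) has_real_derivative vxx x t) (at x)"
    and dt: "\<And>x t. ((\<lambda>s. v x s) has_real_derivative vt x t) (at t)"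
    and eq: "\<And>x t. vt x t = vxx x t + f t (v x t)"
    and nonneg: "\<And>x t. 0 \<le> v x t" and bnd: "\<And>x t. v x t \<le> M"
    and cont: "continuous_on UNIV (\<lambda>p. v (fst p) (snd p))"
    and lip: "\<And>T1 T2. \<exists>L\<ge>0. \<forall>t a b. T1 \<le> t \<and> t \<le> T2 \<and> 0 \<le> a \<and> a \<le> M \<and> 0 \<le> b \<and> b \<le> M
                 \<longrightarrow> \<bar>f t a - f t b\<bar> \<le> L * \<bar>a - b\<bar>"
    and sym: "\<And>x t. v (2 * x0 - x) t = v x t"
    and dec: "\<And>x t. x > x0 \<Longrightarrow> vx x t \<le> 0"
begin

lemma contc:
  assumes "continuous_on S g" "continuous_on S k"
  shows "continuous_on S (\<lambda>p. v (g p) (k p))"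
  using continuous_on_compose2[OF cont continuous_on_Pair[OF assms]] by simp

lemma dshift: "((\<lambda>y. v (y + h) t) has_real_derivative vx (y + h) t) (at y)"
  using DERIV_shift[THEN iffD1, OF dx] .

lemma dxxshift: "((\<lambda>y. vx (y + h) t) has_real_derivative vxx (y + h) t) (at y)"
  using DERIV_shift[THEN iffD1, OF dxx] .

lemma dxr: "((\<lambda>y. v (2*c - y) t) has_real_derivative - vx (2*c - y) t) (at y)"
proof -
  have g: "((\<lambda>y. 2*c - y) has_real_derivative -1) (at y)" by (auto intro!: derivative_eq_intros)
  have "((\<lambda>y. (\<lambda>z. v z t) ((\<lambda>y. 2*c - y) y)) has_real_derivative vx (2*c - y) t * -1) (at y)"
    by (rule DERIV_chain2[where f="\<lambda>z. v z t" and g="\<lambda>y. 2*c - y"]) (rule dx, rule g)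
  thus ?thesis by simp
qed

lemma dxxr: "((\<lambda>y. vx (2*c - y) t) has_real_derivative - vxx (2*c - y) t) (at y)"
proof -
  have g: "((\<lambda>y. 2*c - y) has_real_derivative -1) (at y)" by (auto intro!: derivative_eq_intros)
  have "((\<lambda>y. (\<lambda>z. vx z t) ((\<lambda>y. 2*c - y) y)) has_real_derivative vxx (2*c - y) t * -1) (at y)"
    by (rule DERIV_chain2[where f="\<lambda>z. vx z t" and g="\<lambda>y. 2*c - y"]) (rule dxx, rule g)
  thus ?thesis by simp
qed

lemma forward:
  assumes c: "\<And>x. v x t1 = v 0 t1" and t: "t1 \<le> t"
  shows "v x t = v 0 t"
proof -
  obtain L where L: "L \<ge> 0" and Lp: "\<And>s a b. t1 \<le> s \<Longrightarrow> s \<le> t \<Longrightarrow> 0 \<le> a \<Longrightarrow> a \<le> M \<Longrightarrow> 0 \<le> b \<Longrightarrow> b \<le> M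
      \<Longrightarrow> \<bar>f s a - f s b\<bar> \<le> L * \<bar>a - b\<bar>"
    using lip[of t1 t] by blast
  have main: "v (y + h) t = v y t" for y h
  proof -
    have cw: "continuous_on UNIV (\<lambda>p. v (fst p + h) (snd p) - v (fst p) (snd p))"
      by (intro continuous_intros contc) 
    have bw: "\<bar>v (y + h) s - v y s\<bar> \<le> M" for y s
      using nonneg[of "y+h" s] nonneg[of y s] bnd[of "y+h" s] bnd[of y s] by linarith
    have ineq: "\<bar>(vt (y + h) s - vt y s) - (vxx (y + h) s - vxx y s)\<bar> \<le> L * \<bar>v (y + h) s - v y s\<bar>"
      if "t1 \<le> s" "s \<le> t" for y s
      using Lp[OF that nonneg bnd nonneg bnd, of "y+h" s y s] eq[of "y+h" s] eq[of y s] by simp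
    have ineq': "vt y s - vt (y+h) s - (vxx y s - vxx (y+h) s) \<le> L * \<bar>v y s - v (y+h) s\<bar>"
      if "t1 \<le> s" "s \<le> t" for y s
      using ineq[OF that, of y] by (simp add: abs_minus_commute abs_le_iff)
    have init: "\<And>y. v (y + h) t1 - v y t1 = 0" using c[of "_ + h"] c by (metis diff_self)
    have "v (y + h) t - v y t \<le> 0"
      by (rule zero_unique[where w = "\<lambda>y s. v (y + h) s - v y s"
            and wx = "\<lambda>y s. vx (y + h) s - vx y s" and wxx = "\<lambda>y s. vxx (y + h) s - vxx y s"
            and wt = "\<lambda>y s. vt (y + h) s - vt y s" and B = M and tlo = t1 and thi = t and L = L])
        (use cw bw L t ineq init in
          \<open>auto intro!: DERIV_diff dshift dx dxxshift dxx dt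
            simp: DERIV_shift[symmetric] abs_le_iff\<close>)
    moreover have "- (v (y + h) t - v y t) \<le> 0"
      by (rule zero_unique[where w = "\<lambda>y s. - (v (y + h) s - v y s)"
            and wx = "\<lambda>y s. - (vx (y + h) s - vx y s)" and wxx = "\<lambda>y s. - (vxx (y + h) s - vxx y s)"
            and wt = "\<lambda>y s. - (vt (y + h) s - vt y s)" and B = M and tlo = t1 and thi = t and L = L])
        (use continuous_on_minus[OF cw] bw L t ineq' init in
          \<open>auto intro!: DERIV_diff DERIV_minus dshift dx dxxshift dxx dt
            simp: abs_le_iff\<close>)
    ultimately show ?thesis by simp
  qed
  show ?thesis using main[of 0 x] by simp
qed

end


context esol begin

lemma contx: "continuous_on S (\<lambda>y. v y t)"
  using DERIV_isCont[OF dx] by (simp add: continuous_at_imp_continuous_on)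

lemma contt: "continuous_on S (\<lambda>s. v x s)"
  using DERIV_isCont[OF dt] by (simp add: continuous_at_imp_continuous_on)

lemma mono_right:
  assumes "x0 \<le> a" "a \<le> b"
  shows "v b t \<le> v a t"
  using DERIV_nonpos_imp_decreasing_open[of a b "\<lambda>y. v y t"] assms dx dec contx
  by force

lemma z_nonneg:
  assumes "x \<le> x1" "x0 < x1"
  shows "v (2*x1 - x) t \<le> v x t"
proof (cases "x \<ge> x0")
  case True thus ?thesis using mono_right[of x "2*x1 - x" t] assms by simp
next
  case False
  hence "v (2*x1 - x) t \<le> v (2*x0 - x) t" using mono_right[of "2*x0 - x" "2*x1 - x" t] assms by simp
  thus ?thesis using sym[of x t] by simp
qed

definition zeta :: "real \<Rightarrow> real \<Rightarrow> real \<Rightarrow> real \<Rightarrow> real \<Rightarrow> real" where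
  "zeta L ta x1 x s = exp (L * (s - ta)) * (v x s - v (2*x1 - x) s)"

lemma compare:
  fixes ph phx phxx pht :: "real \<Rightarrow> real \<Rightarrow> real"
  assumes x1: "x0 < x1" "b \<le> x1"
    and L: "L \<ge> 0"
    and Lp: "\<And>s a b. ta \<le> s \<Longrightarrow> s \<le> tb \<Longrightarrow> 0 \<le> a \<Longrightarrow> a \<le> M \<Longrightarrow> 0 \<le> b \<Longrightarrow> b \<le> M
      \<Longrightarrow> \<bar>f s a - f s b\<bar> \<le> L * \<bar>a - b\<bar>"
    and pdx: "\<And>x s. ((\<lambda>y. ph y s) has_real_derivative phx x s) (at x)"
    and pdxx: "\<And>x s. ((\<lambda>y. phx y s) has_real_derivative phxx x s) (at x)"
    and pdt: "\<And>x s. ((\<lambda>s. ph x s) has_real_derivative pht x s) (at s)"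
    and pcont: "continuous_on UNIV (\<lambda>p. ph (fst p) (snd p))"
    and psub: "\<And>x s. a < x \<Longrightarrow> x < b \<Longrightarrow> ta < s \<Longrightarrow> s \<le> tb \<Longrightarrow> pht x s - phxx x s \<le> 0"
    and bl: "\<And>s. ta \<le> s \<Longrightarrow> s \<le> tb \<Longrightarrow> ph a s \<le> zeta L ta x1 a s"
    and br: "\<And>s. ta \<le> s \<Longrightarrow> s \<le> tb \<Longrightarrow> ph b s \<le> zeta L ta x1 b s"
    and bb: "\<And>x. a \<le> x \<Longrightarrow> x \<le> b \<Longrightarrow> ph x ta \<le> zeta L ta x1 x ta"
    and x: "a \<le> x" "x \<le> b" and s: "ta \<le> s" "s \<le> tb"
  shows "ph x s \<le> zeta L ta x1 x s"
proof (rule ccontr)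
  assume "\<not> ph x s \<le> zeta L ta x1 x s"
  hence gap: "ph x s - zeta L ta x1 x s > 0" by simp
  define del where "del = (ph x s - zeta L ta x1 x s) / (2 * (1 + (s - ta)))"
  have delpos: "del > 0" unfolding del_def using gap s by simp
  define E where "E r = exp (L * (r - ta))" for r
  define P where "P y r = ph y r - zeta L ta x1 y r - del * (1 + (r - ta))" for y r
  have "P x s \<le> 0"
  proof (rule max_principle[where P = P and a = a and b = b and tA = ta and tB = tb
        and Px = "\<lambda>y r. phx y r - E r * (vx y r + vx (2*x1 - y) r)"
        and Pxx = "\<lambda>y r. phxx y r - E r * (vxx y r - vxx (2*x1 - y) r)"
        and Pt = "\<lambda>y r. pht y r - (L * E r * (v y r - v (2*x1 - y) r) + E r * (vt y r - vt (2*x1 - y) r)) - del"])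
    have ce: "continuous_on UNIV E" unfolding E_def by (intro continuous_intros)
    have c1: "continuous_on UNIV (\<lambda>p::real\<times>real. E (snd p))"
      using continuous_on_compose2[OF ce continuous_on_snd[OF continuous_on_id]] by simp
    have c2: "continuous_on UNIV (\<lambda>p::real\<times>real. v (fst p) (snd p) - v (2*x1 - fst p) (snd p))"
      by (intro continuous_on_diff contc continuous_intros)
    have c3: "continuous_on UNIV (\<lambda>p::real\<times>real. del * (1 + (snd p - ta)))"
      by (intro continuous_intros)
    show "continuous_on ({a..b} \<times> {ta..tb}) (\<lambda>p. P (fst p) (snd p))"
    proof (rule continuous_on_subset[of UNIV])
      show "continuous_on UNIV (\<lambda>p. P (fst p) (snd p))"
        unfolding P_def zeta_def E_def[symmetric]
        using continuous_on_diff[OF continuous_on_diff[OF pcont continuous_on_mult[OF c1 c2]] c3] by simp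
    qed simp
    fix y r
    show "((\<lambda>y. P y r) has_real_derivative phx y r - E r * (vx y r + vx (2*x1 - y) r)) (at y)"
      unfolding P_def zeta_def E_def[symmetric]
      by (auto intro!: derivative_eq_intros pdx dx dxr[where c = x1])
    show "((\<lambda>y. phx y r - E r * (vx y r + vx (2*x1 - y) r)) has_real_derivative
        phxx y r - E r * (vxx y r - vxx (2*x1 - y) r)) (at y)"
      by (auto intro!: derivative_eq_intros pdxx dxx dxxr[where c = x1])
    have de: "(E has_real_derivative (L * E r)) (at r)"
      unfolding E_def by (auto intro!: derivative_eq_intros)
    show "((\<lambda>r. P y r) has_real_derivative pht y r - (L * E r * (v y r - v (2*x1 - y) r) + E r * (vt y r - vt (2*x1 - y) r)) - del) (at r)"
      unfolding P_def zeta_def E_def[symmetric]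
      by (auto intro!: derivative_eq_intros pdt dt de)
    assume yr: "a < y" "y < b" "ta < r" "r \<le> tb"
    have zn: "v y r - v (2*x1 - y) r \<ge> 0" using z_nonneg[of y x1 r] yr x1 by simp
    have "\<bar>f r (v y r) - f r (v (2*x1 - y) r)\<bar> \<le> L * \<bar>v y r - v (2*x1 - y) r\<bar>"
      using Lp[of r] yr nonneg bnd by simp
    hence fl: "f r (v y r) - f r (v (2*x1 - y) r) \<ge> - L * (v y r - v (2*x1 - y) r)"
      using zn by (simp add: abs_le_iff)
    have Epos: "E r > 0" unfolding E_def by simp
    have "(L * E r * (v y r - v (2*x1 - y) r) + E r * (vt y r - vt (2*x1 - y) r))
          - E r * (vxx y r - vxx (2*x1 - y) r)
        = E r * (L * (v y r - v (2*x1 - y) r) + (f r (v y r) - f r (v (2*x1 - y) r)))"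
      using eq[of y r] eq[of "2*x1 - y" r] by (simp add: algebra_simps)
    also have "\<dots> \<ge> 0" using fl Epos by (intro mult_nonneg_nonneg) auto
    finally show "pht y r - (L * E r * (v y r - v (2*x1 - y) r) + E r * (vt y r - vt (2*x1 - y) r)) - del
        - (phxx y r - E r * (vxx y r - vxx (2*x1 - y) r)) < 0"
      using psub[OF yr] delpos by linarith
  next
    fix r assume r: "ta \<le> r" "r \<le> tb"
    have "del * (1 + (r - ta)) \<ge> 0" using delpos r by simp
    thus "P a r \<le> 0" "P b r \<le> 0" using bl[OF r] br[OF r] unfolding P_def by linarith+
  next
    fix y assume "a \<le> y" "y \<le> b"
    thus "P y ta \<le> 0" using bb delpos unfolding P_def by fastforce
  qed (use x s in auto)
  moreover have "P x s = (ph x s - zeta L ta x1 x s) / 2"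
    unfolding P_def del_def using s by (simp add: field_simps)
  ultimately show False using gap by simp
qed

end


lemma pos_near:
  fixes g :: "real \<Rightarrow> real"
  assumes "isCont g x" "g x > m"
  shows "\<exists>r>0. \<forall>y. \<bar>y - x\<bar> < r \<longrightarrow> g y > m"
proof -
  have "eventually (\<lambda>y. g y > m) (at x)"
    using order_tendstoD(1)[OF assms(1)[unfolded isCont_def] assms(2)] .
  then obtain d where d: "d > 0" "\<And>y. y \<noteq> x \<Longrightarrow> dist y x < d \<Longrightarrow> g y > m"
    unfolding eventually_at by auto
  show ?thesis using d assms(2) by (intro exI[of _ d]) (metis dist_real_def)
qed

context esol begin

lemma zeta_nonneg: "x0 < x1 \<Longrightarrow> y \<le> x1 \<Longrightarrow> zeta L ta x1 y s \<ge> 0"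
  unfolding zeta_def using z_nonneg[of y x1 s] by simp

lemma vertical:
  assumes x1: "x0 < x1" and q0: "v x0 t' = v (2*x1 - x0) t'" and tt: "t \<le> t'"
  shows "v x0 t = v (2*x1 - x0) t"
proof (rule ccontr)
  assume ne: "v x0 t \<noteq> v (2*x1 - x0) t"
  hence tt': "t < t'" using tt q0 by (cases "t = t'") auto
  have zpos: "v x0 t - v (2*x1 - x0) t > 0" using ne z_nonneg[of x0 x1 t] x1 by simp
  define m where "m = (v x0 t - v (2*x1 - x0) t) / 2"
  have mpos: "m > 0" using zpos unfolding m_def by simp
  have ic: "isCont (\<lambda>y. v y t - v (2*x1 - y) t) x0"
    using DERIV_isCont[OF DERIV_diff[OF dx dxr[where c = x1]]] by simp
  obtain r0 where r0: "r0 > 0" "\<And>y. \<bar>y - x0\<bar> < r0 \<Longrightarrow> v y t - v (2*x1 - y) t > m"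
    using pos_near[OF ic, of m] zpos unfolding m_def by auto
  define r where "r = min (r0/2) (x1 - x0)"
  have r: "r > 0" "r \<le> x1 - x0" "r < r0" using r0 x1 unfolding r_def by auto
  obtain L where L: "L \<ge> 0" and Lp: "\<And>s a b. t \<le> s \<Longrightarrow> s \<le> t' \<Longrightarrow> 0 \<le> a \<Longrightarrow> a \<le> M \<Longrightarrow> 0 \<le> b \<Longrightarrow> b \<le> M
      \<Longrightarrow> \<bar>f s a - f s b\<bar> \<le> L * \<bar>a - b\<bar>"
    using lip[of t t'] by blast
  define c where "c = pi / (2 * r)"
  define ph where "ph y s = m * exp (- (c * c) * (s - t)) * cos (c * (y - x0))" for y s
  have "ph x0 t' \<le> zeta L t x1 x0 t'"
  proof (rule compare[where ph = ph and a = "x0 - r" and b = "x0 + r" and ta = t and tb = t' and L = L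
        and phx = "\<lambda>y s. m * exp (- (c * c) * (s - t)) * (- sin (c * (y - x0)) * c)"
        and phxx = "\<lambda>y s. m * exp (- (c * c) * (s - t)) * (- cos (c * (y - x0)) * c * c)"
        and pht = "\<lambda>y s. m * (- (c * c) * exp (- (c * c) * (s - t))) * cos (c * (y - x0))"])
    fix y s
    show "((\<lambda>y. ph y s) has_real_derivative m * exp (- (c * c) * (s - t)) * (- sin (c * (y - x0)) * c)) (at y)"
      unfolding ph_def by (auto intro!: derivative_eq_intros)
    show "((\<lambda>y. m * exp (- (c * c) * (s - t)) * (- sin (c * (y - x0)) * c)) has_real_derivative
        m * exp (- (c * c) * (s - t)) * (- cos (c * (y - x0)) * c * c)) (at y)"
      by (auto intro!: derivative_eq_intros)
    show "((\<lambda>s. ph y s) has_real_derivative m * (- (c * c) * exp (- (c * c) * (s - t))) * cos (c * (y - x0))) (at s)"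
      unfolding ph_def by (auto intro!: derivative_eq_intros)
    show "m * (- (c * c) * exp (- (c * c) * (s - t))) * cos (c * (y - x0)) -
          m * exp (- (c * c) * (s - t)) * (- cos (c * (y - x0)) * c * c) \<le> 0"
      by (simp add: algebra_simps)
  next
    show "continuous_on UNIV (\<lambda>p. ph (fst p) (snd p))"
      unfolding ph_def by (intro continuous_intros)
  next
    have "c * (x0 - r - x0) = - (pi/2)" "c * (x0 + r - x0) = pi/2"
      unfolding c_def using r by (simp_all add: field_simps)
    hence "ph (x0 - r) s = 0" "ph (x0 + r) s = 0" for s unfolding ph_def by (simp_all only: cos_minus cos_pi_half mult_zero_right)
    thus "ph (x0 - r) s \<le> zeta L t x1 (x0 - r) s" "ph (x0 + r) s \<le> zeta L t x1 (x0 + r) s" for s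
      using zeta_nonneg[OF x1] r by auto
  next
    fix y assume y: "x0 - r \<le> y" "y \<le> x0 + r"
    have "ph y t \<le> m" unfolding ph_def using mpos by simp
    moreover have "\<bar>y - x0\<bar> < r0" using y r by (simp add: abs_le_iff)
    hence "m < v y t - v (2 * x1 - y) t" using r0(2) by blast
    moreover have "zeta L t x1 y t = v y t - v (2 * x1 - y) t" unfolding zeta_def by simp
    ultimately show "ph y t \<le> zeta L t x1 y t" by linarith
  qed (use x1 r L Lp tt' in auto)
  moreover have "zeta L t x1 x0 t' = 0" unfolding zeta_def using q0 by simp
  moreover have "ph x0 t' > 0" unfolding ph_def using mpos by simp
  ultimately show False by simp
qed

end


lemma exp_diff_bound:
  fixes k X d r :: real
  assumes "k > 0" "r \<le> X" "X \<le> d"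
  shows "exp (- k * X) - exp (- k * d) \<le> k * exp (- k * r) * (d - X)"
proof -
  have "exp (- k * d) = exp (- k * X) * exp (- (k * (d - X)))"
    by (simp add: exp_add[symmetric] algebra_simps)
  hence "exp (- k * X) - exp (- k * d) = exp (- k * X) * (1 - exp (- (k * (d - X))))"
    by (simp add: algebra_simps)
  also have "\<dots> \<le> exp (- k * X) * (k * (d - X))"
    using exp_ge_add_one_self[of "- (k * (d - X))"] by (intro mult_left_mono) auto
  also have "\<dots> \<le> exp (- k * r) * (k * (d - X))"
    using assms by (intro mult_right_mono) (auto intro: mult_nonneg_nonneg)
  finally show ?thesis by (simp add: algebra_simps)
qed

context esol begin

lemma hopf:
  assumes x1: "x0 < x1" and tab: "ta < tb"
    and qpos: "\<And>t. ta \<le> t \<Longrightarrow> t \<le> tb \<Longrightarrow> v (2*x1 - x0) t < v x0 t"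
  shows "vx x1 tb < 0"
proof -
  define d where "d = x1 - x0"
  have dpos: "d > 0" using x1 unfolding d_def by simp
  have cq: "continuous_on {ta..tb} (\<lambda>t. v x0 t - v (2*x1 - x0) t)"
    by (intro continuous_on_diff contt)
  obtain tm where tm: "tm \<in> {ta..tb}" and tmin: "\<And>t. t \<in> {ta..tb} \<Longrightarrow>
      v x0 tm - v (2*x1 - x0) tm \<le> v x0 t - v (2*x1 - x0) t"
    using continuous_attains_inf[OF compact_Icc _ cq] tab by auto
  define m0 where "m0 = v x0 tm - v (2*x1 - x0) tm"
  have m0pos: "m0 > 0" unfolding m0_def using qpos tm by auto
  define mm where "mm = m0 / 2"
  have mmpos: "mm > 0" unfolding mm_def using m0pos by simp
  have ic: "isCont (\<lambda>y. v y ta - v (2*x1 - y) ta) x0"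
    using DERIV_isCont[OF DERIV_diff[OF dx dxr[where c = x1]]] by simp
  have "v x0 ta - v (2*x1 - x0) ta > mm"
    using tmin[of ta] tab m0pos unfolding mm_def m0_def by auto
  then obtain r0 where r0: "r0 > 0" "\<And>y. \<bar>y - x0\<bar> < r0 \<Longrightarrow> v y ta - v (2*x1 - y) ta > mm"
    using pos_near[OF ic, of mm] by auto
  define r where "r = min (r0/2) (d/2)"
  have r: "r > 0" "r < d" "r < r0" using r0 dpos unfolding r_def by auto
  obtain L where L: "L \<ge> 0" and Lp: "\<And>s a b. ta \<le> s \<Longrightarrow> s \<le> tb \<Longrightarrow> 0 \<le> a \<Longrightarrow> a \<le> M \<Longrightarrow> 0 \<le> b \<Longrightarrow> b \<le> M
      \<Longrightarrow> \<bar>f s a - f s b\<bar> \<le> L * \<bar>a - b\<bar>"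
    using lip[of ta tb] by blast
  define S where "S = tb - ta"
  have Spos: "S > 0" using tab unfolding S_def by simp
  define k where "k = (d + 1) / S"
  have kpos: "k > 0" unfolding k_def using dpos Spos by simp
  have kS: "k * S = d + 1" unfolding k_def using Spos by simp
  define eps where "eps = mm * exp (- (k * k * S))"
  have epspos: "eps > 0" unfolding eps_def using mmpos by simp
  have epsle: "eps \<le> mm" unfolding eps_def using mmpos kpos Spos
    by (simp add: mult_left_le_one_le)
  have epsS: "eps * exp (k * k * S) = mm" unfolding eps_def by (simp add: exp_minus field_simps)
  define eta where "eta = eps * k * exp (- k * r)"
  have etapos: "eta \<ge> 0" unfolding eta_def using epspos kpos by simp
  define ph where "ph y s = eps * exp (k * k * (s - ta)) * (exp (- k * (y - x0)) - exp (- k * d))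
      - eta * (d - (y - x0))" for y s
  define phx where "phx y s = eps * exp (k * k * (s - ta)) * (- k * exp (- k * (y - x0))) + eta" for y s
  have cmp: "ph y tb \<le> zeta L ta x1 y tb" if y: "x0 \<le> y" "y \<le> x1" for y
  proof (rule compare[where ph = ph and a = x0 and b = x1 and ta = ta and tb = tb and L = L
        and phx = phx
        and phxx = "\<lambda>y s. eps * exp (k * k * (s - ta)) * (k * k * exp (- k * (y - x0)))"
        and pht = "\<lambda>y s. eps * (k * k * exp (k * k * (s - ta))) * (exp (- k * (y - x0)) - exp (- k * d))"])
    fix y s
    show "((\<lambda>y. ph y s) has_real_derivative phx y s) (at y)"
      unfolding ph_def phx_def by (auto intro!: derivative_eq_intros)
    show "((\<lambda>y. phx y s) has_real_derivative eps * exp (k * k * (s - ta)) * (k * k * exp (- k * (y - x0)))) (at y)"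
      unfolding phx_def by (auto intro!: derivative_eq_intros)
    show "((\<lambda>s. ph y s) has_real_derivative eps * (k * k * exp (k * k * (s - ta))) * (exp (- k * (y - x0)) - exp (- k * d))) (at s)"
      unfolding ph_def by (auto intro!: derivative_eq_intros)
    have "eps * (k * k * exp (k * k * (s - ta))) * (exp (- k * (y - x0)) - exp (- k * d))
        - eps * exp (k * k * (s - ta)) * (k * k * exp (- k * (y - x0)))
        = - (eps * (k * k) * exp (k * k * (s - ta)) * exp (- k * d))" by (simp add: algebra_simps)
    also have "\<dots> \<le> 0" using epspos by simp
    finally show "eps * (k * k * exp (k * k * (s - ta))) * (exp (- k * (y - x0)) - exp (- k * d))
        - eps * exp (k * k * (s - ta)) * (k * k * exp (- k * (y - x0))) \<le> 0" .
  next
    show "continuous_on UNIV (\<lambda>p. ph (fst p) (snd p))"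
      unfolding ph_def by (intro continuous_intros)
  next
    fix s assume s: "ta \<le> s" "s \<le> tb"
    have "eps * exp (k * k * (s - ta)) * (1 - exp (- (k * d))) \<le> eps * exp (k * k * (s - ta))"
      using epspos by (intro mult_left_le) auto
    moreover have "eta * d \<ge> 0" using etapos dpos by simp
    ultimately have "ph x0 s \<le> eps * exp (k * k * (s - ta))"
      unfolding ph_def by simp
    also have "\<dots> \<le> eps * exp (k * k * S)"
      using s epspos unfolding S_def by (simp add: mult_left_mono)
    also have "\<dots> = mm" by (rule epsS)
    also have "mm \<le> v x0 s - v (2*x1 - x0) s"
      using tmin[of s] s unfolding mm_def m0_def using m0pos by (auto simp: m0_def)
    also have "\<dots> \<le> zeta L ta x1 x0 s"
    proof -
      have "exp (L * (s - ta)) \<ge> 1" using L s by simp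
      hence "1 * (v x0 s - v (2*x1 - x0) s) \<le> exp (L * (s - ta)) * (v x0 s - v (2*x1 - x0) s)"
        using qpos[OF s] by (intro mult_right_mono) auto
      thus ?thesis unfolding zeta_def by simp
    qed
    finally show "ph x0 s \<le> zeta L ta x1 x0 s" .
  next
    fix s
    have "ph x1 s = 0" unfolding ph_def d_def by simp
    moreover have "zeta L ta x1 x1 s = 0" unfolding zeta_def by simp
    ultimately show "ph x1 s \<le> zeta L ta x1 x1 s" by simp
  next
    fix y assume y: "x0 \<le> y" "y \<le> x1"
    show "ph y ta \<le> zeta L ta x1 y ta"
    proof (cases "y - x0 \<le> r")
      case True
      have "eps * exp (- k * d) \<ge> 0" "eta * (d - (y - x0)) \<ge> 0"
        using epspos etapos y unfolding d_def by simp_all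
      hence "ph y ta \<le> eps * exp (- k * (y - x0))"
        unfolding ph_def by (simp add: right_diff_distrib)
      also have "\<dots> \<le> eps" using kpos y epspos by (simp add: mult_left_le_one_le)
      also have "\<dots> \<le> mm" by (rule epsle)
      also have "mm < v y ta - v (2*x1 - y) ta" using r0(2)[of y] True y r by simp
      also have "\<dots> = zeta L ta x1 y ta" unfolding zeta_def by simp
      finally show ?thesis by simp
    next
      case False
      have "exp (- k * (y - x0)) - exp (- k * d) \<le> k * exp (- k * r) * (d - (y - x0))"
        using exp_diff_bound[OF kpos, of r "y - x0" d] False y unfolding d_def by simp
      hence "eps * (exp (- k * (y - x0)) - exp (- k * d)) \<le> eta * (d - (y - x0))"
        unfolding eta_def using mult_left_mono[OF _ less_imp_le[OF epspos]] by (simp add: mult.assoc)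
      hence "ph y ta \<le> 0" unfolding ph_def by simp
      thus ?thesis using zeta_nonneg[OF x1, of y L ta ta] y by linarith
    qed
  qed (use x1 L Lp tab y in auto)
  define E where "E = exp (L * (tb - ta))"
  have Epos: "E > 0" unfolding E_def by simp
  define p where "p y = zeta L ta x1 y tb - ph y tb" for y
  have dp: "(p has_real_derivative (E * (vx x1 tb + vx (2*x1 - x1) tb) - phx x1 tb)) (at x1)"
    unfolding p_def zeta_def E_def ph_def phx_def
    by (auto intro!: derivative_eq_intros dx dxr[where c = x1])
  have "E * (vx x1 tb + vx (2*x1 - x1) tb) - phx x1 tb \<le> 0"
  proof (rule ccontr)
    assume "\<not> ?thesis"
    then obtain del where del: "del > 0" "\<And>h. h > 0 \<Longrightarrow> h < del \<Longrightarrow> p (x1 - h) < p x1"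
      using DERIV_pos_inc_left[OF dp] by force
    define h where "h = min (del/2) d"
    have h: "h > 0" "h < del" "h \<le> d" using del dpos unfolding h_def by auto
    have "p x1 = 0" unfolding p_def zeta_def ph_def d_def by simp
    moreover have "p (x1 - h) \<ge> 0" unfolding p_def using cmp[of "x1 - h"] h unfolding d_def by simp
    ultimately show False using del(2)[OF h(1,2)] by simp
  qed
  moreover have "phx x1 tb < 0"
  proof -
    have e1: "k * k * S = k * d + k" using kS by (simp add: mult.assoc distrib_left)
    have "k * r > 0" using kpos r by simp
    hence "- k * r < k * k * S - k * d" using e1 kpos by linarith
    hence "exp (- k * r) < exp (k * k * S) * exp (- k * d)"
      by (simp add: exp_add[symmetric])
    hence "eps * k * exp (- k * r) < eps * k * (exp (k * k * S) * exp (- k * d))"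
      using epspos kpos by simp
    thus ?thesis unfolding phx_def eta_def S_def d_def by (simp add: algebra_simps)
  qed
  ultimately have "E * (2 * vx x1 tb) < 0" by simp
  thus ?thesis using Epos by (simp add: mult_less_0_iff)
qed

end


context esol begin

lemma key:
  assumes x1: "x0 < x1" and v0: "vx x1 t1 = 0" and t: "t \<le> t1"
    and y: "x0 \<le> y" "y \<le> 2*x1 - x0"
  shows "v y t = v x0 t"
proof -
  have q0: "v x0 ta = v (2*x1 - x0) ta" if ta: "ta \<le> t1" for ta
  proof (rule ccontr)
    assume ne: "v x0 ta \<noteq> v (2*x1 - x0) ta"
    show False
    proof (cases "\<exists>t'. ta \<le> t' \<and> t' \<le> t1 \<and> v x0 t' = v (2*x1 - x0) t'")
      case True
      then obtain t' where "ta \<le> t'" "v x0 t' = v (2*x1 - x0) t'" by blast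
      with vertical[OF x1] ne show False by blast
    next
      case False
      hence pos: "v (2*x1 - x0) s < v x0 s" if "ta \<le> s" "s \<le> t1" for s
        using z_nonneg[of x0 x1 s] x1 that by force
      have ic: "isCont (\<lambda>s. v x0 s - v (2*x1 - x0) s) ta"
        using DERIV_isCont[OF DERIV_diff[OF dt dt]] by simp
      obtain del where del: "del > 0" "\<And>s. \<bar>s - ta\<bar> < del \<Longrightarrow> v x0 s - v (2*x1 - x0) s > 0"
        using pos_near[OF ic, of 0] pos[of ta] ta by auto
      have "vx x1 t1 < 0"
      proof (rule hopf[OF x1, of "ta - del/2"])
        show "ta - del/2 < t1" using ta del by simp
        fix s assume s: "ta - del/2 \<le> s" "s \<le> t1"
        show "v (2*x1 - x0) s < v x0 s"
        proof (cases "s < ta")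
          case True
          hence "\<bar>s - ta\<bar> < del" using s del by (simp add: abs_if)
          thus ?thesis using del(2) by force
        qed (use pos s in auto)
      qed
      thus False using v0 by simp
    qed
  qed
  have "v y t \<le> v x0 t" using mono_right[of x0 y t] y by simp
  moreover have "v (2*x1 - x0) t \<le> v y t" using mono_right[of y "2*x1 - x0" t] y by simp
  ultimately show ?thesis using q0[OF t] by simp
qed

lemma backward:
  assumes x1: "x0 < x1" and v0: "vx x1 t1 = 0"
  shows "t \<le> t1 \<Longrightarrow> x0 \<le> y \<Longrightarrow> y \<le> x0 + 2^n * (x1 - x0) \<Longrightarrow> v y t = v x0 t"
proof (induction n arbitrary: t y)
  case 0
  thus ?case using key[OF x1 v0, of t y] x1 by simp
next
  case (Suc n)
  define x1' where "x1' = x0 + 2^n * (x1 - x0)"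
  have pos: "2^n * (x1 - x0) > 0" using x1 by simp
  have x1': "x0 < x1'" unfolding x1'_def using pos by simp
  have "vx x1' t1 = 0"
  proof (rule DERIV_local_max[OF dx, of "2^n * (x1 - x0)"])
    show "0 < 2^n * (x1 - x0)" by (rule pos)
    show "\<forall>y. \<bar>x1' - y\<bar> < 2 ^ n * (x1 - x0) \<longrightarrow> v y t1 \<le> v x1' t1"
    proof (intro allI impI)
      fix y assume "\<bar>x1' - y\<bar> < 2 ^ n * (x1 - x0)"
      hence "x1' - y < 2 ^ n * (x1 - x0)" by linarith
      hence yx: "x0 < y" unfolding x1'_def by simp
      show "v y t1 \<le> v x1' t1"
      proof (cases "y \<le> x1'")
        case True
        hence "v y t1 = v x0 t1" using Suc.IH[of t1 y] yx unfolding x1'_def by simp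
        moreover have "v x1' t1 = v x0 t1" using Suc.IH[of t1 x1'] x1' unfolding x1'_def by simp
        ultimately show ?thesis by simp
      next
        case False thus ?thesis using mono_right[of x1' y t1] x1' by simp
      qed
    qed
  qed
  from key[OF x1' this Suc.prems(1,2)] Suc.prems(3) show ?case
    unfolding x1'_def by (simp add: algebra_simps)
qed

lemma dichotomy: "(\<forall>x t. x > x0 \<longrightarrow> vx x t < 0) \<or> (\<exists>g. \<forall>x t. v x t = g t)"
proof (cases "\<forall>x t. x > x0 \<longrightarrow> vx x t < 0")
  case True thus ?thesis by blast
next
  case False
  then obtain x1 t1 where x1: "x1 > x0" and "\<not> vx x1 t1 < 0" by auto
  hence v0: "vx x1 t1 = 0" using dec[OF x1, of t1] by simp
  have bk: "v y t = v x0 t" if "t \<le> t1" for y t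
  proof (cases "y \<ge> x0")
    case True
    obtain n where "(y - x0) / (x1 - x0) < 2 ^ n" using real_arch_pow[of 2 "(y - x0) / (x1 - x0)"] by auto
    hence "y \<le> x0 + 2^n * (x1 - x0)" using x1 by (simp add: field_simps)
    thus ?thesis using backward[OF x1 v0 that True] by simp
  next
    case False
    obtain n where "(x0 - y) / (x1 - x0) < 2 ^ n" using real_arch_pow[of 2 "(x0 - y) / (x1 - x0)"] by auto
    hence "2*x0 - y \<le> x0 + 2^n * (x1 - x0)" using x1 by (simp add: field_simps)
    hence "v (2*x0 - y) t = v x0 t" using backward[OF x1 v0 that, of "2*x0 - y"] False by simp
    thus ?thesis using sym[of y t] by simp
  qed
  have "v x t = v 0 t" for x t
  proof (cases "t \<le> t1")
    case True thus ?thesis using bk[OF True, of x] bk[OF True, of 0] by simp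
  next
    case False
    have "v y t1 = v 0 t1" for y using bk[of t1 y] bk[of t1 0] by simp
    thus ?thesis by (rule forward[of t1]) (use False in auto)
  qed
  thus ?thesis by blast
qed

end


theorem lemma2p10:
  fixes T :: real and f :: "real \<Rightarrow> real \<Rightarrow> real"
    and u0 :: "real \<Rightarrow> real" and u :: "real \<Rightarrow> real \<Rightarrow> real" and x0 :: real
  assumes "T > 0"
    and "locally_hoelder_on (UNIV \<times> {0..}) f"
    and "C1_in_u f"
    and "\<forall>t. f t 0 = 0"
    and "\<forall>t w. w \<ge> 0 \<longrightarrow> f (t + T) w = f t w"
    and "u0 \<in> borel_measurable lborel"
    and "bounded (range u0)"
    and "\<forall>x. u0 x \<ge> 0"
    and "\<exists>R. \<forall>x. \<bar>x\<bar> > R \<longrightarrow> u0 x = 0"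
    and "solves_cauchy f u0 u"
    and "\<exists>M. \<forall>x t. t > 0 \<longrightarrow> \<bar>u x t\<bar> \<le> M"
    and "\<forall>v\<in>omega_tilde f T u.
           (\<forall>x t. v (2 * x0 - x) t = v x t)
         \<and> (\<forall>x t. x < x0 \<longrightarrow> deriv (\<lambda>y. v y t) x \<ge> 0)
         \<and> (\<forall>x t. x > x0 \<longrightarrow> deriv (\<lambda>y. v y t) x \<le> 0)"
  shows "\<forall>v\<in>omega_tilde f T u. sym_decreasing v x0 \<or> (\<exists>g. \<forall>x t. v x t = g t)"
proof
  fix v assume vin: "v \<in> omega_tilde f T u"
  have Tpos: "T > 0" by fact
  obtain M where M: "\<And>x t. t > 0 \<Longrightarrow> \<bar>u x t\<bar> \<le> M" using assms(11) by blast
  have es: "entire_solution f v" and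
    conv: "\<exists>k :: nat \<Rightarrow> nat. (\<forall>j. 0 < k j) \<and> filterlim k at_top sequentially \<and>
            (\<forall>K :: (real \<times> real) set. compact K \<longrightarrow>
               (\<forall>e>0. \<forall>\<^sub>F j in sequentially. \<forall>(x, t)\<in>K. \<bar>u x (t + real (k j) * T) - v x t\<bar> < e))"
    using vin unfolding omega_tilde_def by auto
  obtain k :: "nat \<Rightarrow> nat" where klim: "filterlim k at_top sequentially"
    and kconv: "\<And>K e. compact K \<Longrightarrow> e > 0 \<Longrightarrow>
       \<forall>\<^sub>F j in sequentially. \<forall>(x, t)\<in>K. \<bar>u x (t + real (k j) * T) - v x t\<bar> < e"
    using conv by blast
  obtain vx vxx vt where sol: "\<forall>(x, t)\<in>UNIV.
            ((\<lambda>y. v y t) has_real_derivative vx x t) (at x)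
          \<and> ((\<lambda>y. vx y t) has_real_derivative vxx x t) (at x)
          \<and> ((\<lambda>s. v x s) has_real_derivative vt x t) (at t)
          \<and> vt x t = vxx x t + f t (v x t)
          \<and> v x t \<ge> 0"
      and vcont: "continuous_on UNIV (\<lambda>(x, t). v x t)"
    using es unfolding entire_solution_def classical_solution_on_def by blast
  have vbnd: "v x t \<le> M" for x t
  proof (rule field_le_epsilon)
    fix e :: real assume e: "e > 0"
    have ev1: "\<forall>\<^sub>F j in sequentially. \<bar>u x (t + real (k j) * T) - v x t\<bar> < e"
      using kconv[of "{(x, t)}" e] e by simp
    have ev2: "\<forall>\<^sub>F j in sequentially. real (nat (ceiling (\<bar>t\<bar> / T)) + 1) \<le> real (k j)"
    proof -
      have "\<forall>\<^sub>F j in sequentially. nat (ceiling (\<bar>t\<bar> / T)) + 1 \<le> k j"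
        using klim unfolding filterlim_at_top by blast
      thus ?thesis by (rule eventually_mono) (metis of_nat_le_iff)
    qed
    obtain j where j1: "\<bar>u x (t + real (k j) * T) - v x t\<bar> < e"
      and j2: "real (nat (ceiling (\<bar>t\<bar> / T)) + 1) \<le> real (k j)"
      using eventually_happens'[OF _ eventually_conj[OF ev1 ev2]] by auto
    have "\<bar>t\<bar> / T < real (k j)" using j2
      by (smt (verit) of_nat_1 of_nat_add real_nat_ceiling_ge)
    hence "\<bar>t\<bar> < real (k j) * T" using Tpos by (simp add: field_simps)
    hence "t + real (k j) * T > 0" by linarith
    hence "\<bar>u x (t + real (k j) * T)\<bar> \<le> M" by (rule M)
    thus "v x t \<le> M + e" using j1 by linarith
  qed
  interpret esol f v vx vxx vt M x0
  proof
    show "\<And>x t. ((\<lambda>y. v y t) has_real_derivative vx x t) (at x)" using sol by blast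
    show "\<And>x t. ((\<lambda>y. vx y t) has_real_derivative vxx x t) (at x)" using sol by blast
    show "\<And>x t. ((\<lambda>s. v x s) has_real_derivative vt x t) (at t)" using sol by blast
    show "\<And>x t. vt x t = vxx x t + f t (v x t)" using sol by blast
    show "\<And>x t. 0 \<le> v x t" using sol by blast
    show "\<And>x t. v x t \<le> M" by (rule vbnd)
    show "continuous_on UNIV (\<lambda>p. v (fst p) (snd p))" using vcont by (simp add: case_prod_beta)
    show "\<And>T1 T2. \<exists>L\<ge>0. \<forall>t a b. T1 \<le> t \<and> t \<le> T2 \<and> 0 \<le> a \<and> a \<le> M \<and> 0 \<le> b \<and> b \<le> M
                 \<longrightarrow> \<bar>f t a - f t b\<bar> \<le> L * \<bar>a - b\<bar>"
      using lipschitz_f[OF assms(3)] by blast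
    show "\<And>x t. v (2 * x0 - x) t = v x t" using assms(12) vin by blast
    fix x t assume "x0 < x"
    hence "deriv (\<lambda>y. v y t) x \<le> 0" using assms(12) vin by blast
    moreover have "deriv (\<lambda>y. v y t) x = vx x t" using sol by (auto intro: DERIV_imp_deriv)
    ultimately show "vx x t \<le> 0" by simp
  qed
  from dichotomy show "sym_decreasing v x0 \<or> (\<exists>g. \<forall>x t. v x t = g t)"
  proof
    assume neg: "\<forall>x t. x > x0 \<longrightarrow> vx x t < 0"
    have "deriv (\<lambda>y. v y t) x = vx x t" for x t using dx by (rule DERIV_imp_deriv)
    hence "sym_decreasing v x0" unfolding sym_decreasing_def using sym neg by simp
    thus ?thesis by simp
  qed simp
qed


end
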